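(* In the standing setting, assume (A1), (A4) and (A7). Let $(Z_k)_{k\ge1}$ be i.i.d. $N(0,I_d)$, let $s\in\mathbb N_+$ and let $(U_k)_{k\ge0}$ be mutually independent drift variables at level $s$, independent of $(Z_k)$, and let $X_0$ be independent of both with $\mathbb E|X_0|^4<\infty$. For $h>0$ define $X_{k+1}=X_k+hb(X_k,U_k)+\beta\sqrt hZ_{k+1}$. Then there exist $h_0>0$ and $C>0$, independent of $s$, $h$ and $k$, such that $\mathbb E|X_k|^4\le C$ for all $k\ge1$ and all $h\in(0,h_0)$.
   Context: Standing setting. Let $d,n\in\mathbb N_+$, $\beta\ge0$, and let $a:\mathbb R^d\to\mathbb R^d$, $b:\mathbb R^d\times\mathbb R^n\to\mathbb R^d$ be measurable. $|\cdot|$ is the Euclidean norm (Frobenius norm for matrices), $\nabla$ the Jacobian in $x$, $D^\alpha$ the partial derivative in $x$ for a multi-index $\alpha$. For each $s\in\mathbb N_+$ a law on $\mathbb R^n$ is given; a random variable with this law is a drift variable at level $s$ (generically $U^s$), and $\mathbb E[b(x,U^s)]=a(x)$ for all $x$. All constants below are independent of $s,x,y$. (A1) $|a(x)-a(y)|\le L|x-y|$; $\langle x-y,a(x)-a(y)\rangle\le-K|x-y|^2$ with $K>0$; $a\in C^2$ with $|D^\alpha a|\le C_{a^{(|\alpha|)}}$ for $|\alpha|=1,2$. (A2) $\mathbb E|b(x,U^s)-b(y,U^s)|^2\le\bar L^2|x-y|^2$. (A3) $\mathbb E|b(x,U^s)-a(x)|^2\le\sigma_s^2(1+|x|^2)$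 with $\sigma_s^2\le\kappa/s$. (A4) $\mathbb E|b(x,U^s)-a(x)|^4\le\sigma^{(4)}_s(1+|x|^4)$ with $\sigma^{(4)}_s\le\kappa/s^2$. (A5) for every $u$, $x\mapsto b(x,u)$ is $C^2$ with $|D^\alpha b(x,u)|\le C_{b^{(2)}}$ for $|\alpha|=2$, and $\mathbb E|\nabla b(x,U^s)-\nabla a(x)|^4\le\sigma^{(4)}_s(1+|x|^4)$. (A6) $\mathbb E[D^\alpha b(x,U^s)]=D^\alpha a(x)$ for $|\alpha|\le2$. (A7) $|a(x)|^4\le L_0^{(4)}(1+|x|^4)$. (A8) every drift variable $U^{2s}$ at level $2s$ determines (measurably) two drift variables $U^{2s,1},U^{2s,2}$ at level $s$ with $b(x,U^{2s})=\frac12b(x,U^{2s,1})+\frac12b(x,U^{2s,2})$ for all $x$. *)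

theory Defs
  imports "HOL-Probability.Probability"
begin

definition pd :: "'i::finite \<Rightarrow> (real^'i \<Rightarrow> 'b::real_normed_vector) \<Rightarrow> real^'i \<Rightarrow> 'b" where
  "pd i f x = vector_derivative (\<lambda>t. f (x + t *\<^sub>R axis i 1)) (at 0)"

definition C2_bounded :: "(real^'i::finite \<Rightarrow> 'b::real_normed_vector) \<Rightarrow> real \<Rightarrow> real \<Rightarrow> bool" where
  "C2_bounded f C1 C2 \<longleftrightarrow>
     continuous_on UNIV f \<and>
     (\<forall>i x. (\<lambda>t. f (x + t *\<^sub>R axis i 1)) differentiable (at 0)) \<and>
     (\<forall>i. continuous_on UNIV (pd i f)) \<and>
     (\<forall>i j x. (\<lambda>t. pd i f (x + t *\<^sub>R axis j 1)) differentiable (at 0)) \<and>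
     (\<forall>i j. continuous_on UNIV (pd j (pd i f))) \<and>
     (\<forall>i x. norm (pd i f x) \<le> C1) \<and>
     (\<forall>i j x. norm (pd j (pd i f) x) \<le> C2)"

definition std_gauss_density :: "real^'d::finite \<Rightarrow> ennreal" where
  "std_gauss_density x = ennreal (\<Prod>i\<in>UNIV. std_normal_density (x $ i))"

datatype noise_idx = IX0 | IU nat | IZ nat

definition noise_index_set :: "noise_idx set" where
  "noise_index_set = {IX0} \<union> range IU \<union> IZ ` {1..}"

text \<open>Mutual independence of the whole family X_0, U_0, U_1, ..., Z_1, Z_2, ...
  (equivalently: the U_k are mutually independent, the Z_k are mutually independent,
  (U_k) is independent of (Z_k), and X_0 is independent of both).\<close>
definition joint_indep ::
  "'w measure \<Rightarrow> ('w \<Rightarrow> real^'d::finite) \<Rightarrow> (nat \<Rightarrow> 'w \<Rightarrow> real^'n::finite) \<Rightarrow> (nat \<Rightarrow> 'w \<Rightarrow> real^'d) \<Rightarrow> bool" where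
  "joint_indep M X0 U Z \<longleftrightarrow>
     prob_space.indep_sets M
       (\<lambda>i. case i of
              IX0 \<Rightarrow> {X0 -` A \<inter> space M | A. A \<in> sets borel}
            | IU k \<Rightarrow> {U k -` A \<inter> space M | A. A \<in> sets borel}
            | IZ k \<Rightarrow> {Z k -` A \<inter> space M | A. A \<in> sets borel})
       noise_index_set"

primrec euler_iter ::
  "real \<Rightarrow> real \<Rightarrow> (real^'d::finite \<Rightarrow> real^'n::finite \<Rightarrow> real^'d) \<Rightarrow> ('w \<Rightarrow> real^'d)
     \<Rightarrow> (nat \<Rightarrow> 'w \<Rightarrow> real^'n) \<Rightarrow> (nat \<Rightarrow> 'w \<Rightarrow> real^'d) \<Rightarrow> nat \<Rightarrow> 'w \<Rightarrow> real^'d" where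
  "euler_iter h \<beta> b X0 U Z 0 \<omega> = X0 \<omega>"
| "euler_iter h \<beta> b X0 U Z (Suc k) \<omega> =
     euler_iter h \<beta> b X0 U Z k \<omega> + h *\<^sub>R b (euler_iter h \<beta> b X0 U Z k \<omega>) (U k \<omega>)
     + (\<beta> * sqrt h) *\<^sub>R Z (Suc k) \<omega>"

end

theory Submission
  imports Defs
begin


lemma sum_le_prod_1p:
  fixes x :: "'i \<Rightarrow> real"
  assumes "finite S" "\<And>i. i \<in> S \<Longrightarrow> 0 \<le> x i"
  shows "(\<Sum>i\<in>S. x i) \<le> (\<Prod>i\<in>S. 1 + x i) \<and> 1 \<le> (\<Prod>i\<in>S. 1 + x i)"
  using assms
proof (induction S rule: finite_induct)
  case empty then show ?case by simp
next
  case (insert j S)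
  then have IH: "(\<Sum>i\<in>S. x i) \<le> (\<Prod>i\<in>S. 1 + x i)" "1 \<le> (\<Prod>i\<in>S. 1 + x i)" and xj: "0 \<le> x j" by auto
  define P where "P = (\<Prod>i\<in>S. 1 + x i)"
  have m: "x j * 1 \<le> x j * P" using IH xj unfolding P_def by (intro mult_left_mono) auto
  have e: "(1 + x j) * P = P + x j * P" by (simp add: algebra_simps)
  have "x j + (\<Sum>i\<in>S. x i) \<le> (1 + x j) * (\<Prod>i\<in>S. 1 + x i)"
    using IH m e xj unfolding P_def by linarith
  moreover have "1 \<le> (1 + x j) * (\<Prod>i\<in>S. 1 + x i)"
    using IH m e xj unfolding P_def by linarith
  ultimately show ?case using insert by simp
qed

lemma gauss_sym: "std_gauss_density (- z) = std_gauss_density (z :: real^'d)"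
  unfolding std_gauss_density_def by (simp add: std_normal_density_def)

lemma gauss_meas[measurable]: "(std_gauss_density :: real^'d \<Rightarrow> ennreal) \<in> borel_measurable borel"
  unfolding std_gauss_density_def by measurable

lemma lborel_uminus_vec: "distr lborel borel uminus = (lborel :: ('a::euclidean_space) measure)"
  by (subst lborel_affine[of "-1" 0]) (auto simp: density_1 one_ennreal_def[symmetric])

lemma nn_integral_lborel_uminus:
  fixes f :: "'a::euclidean_space \<Rightarrow> ennreal"
  assumes [measurable]: "f \<in> borel_measurable borel"
  shows "(\<integral>\<^sup>+ z. f (- z) \<partial>lborel) = (\<integral>\<^sup>+ z. f z \<partial>lborel)"
proof -
  have "(\<integral>\<^sup>+ z. f z \<partial>lborel) = (\<integral>\<^sup>+ z. f z \<partial>distr lborel borel uminus)"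
    by (simp add: lborel_uminus_vec)
  also have "\<dots> = (\<integral>\<^sup>+ z. f (- z) \<partial>lborel)"
    by (subst nn_integral_distr) auto
  finally show ?thesis by simp
qed

lemma gauss_nn_sym:
  fixes f :: "real^'d \<Rightarrow> ennreal"
  assumes [measurable]: "f \<in> borel_measurable borel"
  shows "(\<integral>\<^sup>+ z. f (- z) \<partial>density lborel std_gauss_density) = (\<integral>\<^sup>+ z. f z \<partial>density lborel std_gauss_density)"
proof -
  have "(\<integral>\<^sup>+ z. f (- z) \<partial>density lborel std_gauss_density) = (\<integral>\<^sup>+ z. std_gauss_density z * f (- z) \<partial>lborel)"
    by (subst nn_integral_density) auto
  also have "\<dots> = (\<integral>\<^sup>+ z. (\<lambda>z. std_gauss_density z * f z) (- z) \<partial>lborel)"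
    by (simp add: gauss_sym)
  also have "\<dots> = (\<integral>\<^sup>+ z. std_gauss_density z * f z \<partial>lborel)"
    by (rule nn_integral_lborel_uminus) measurable
  also have "\<dots> = (\<integral>\<^sup>+ z. f z \<partial>density lborel std_gauss_density)"
    by (subst nn_integral_density) auto
  finally show ?thesis .
qed

lemma prod_Basis_vec: "(\<Prod>b\<in>(Basis::(real^'d) set). F (z \<bullet> b)) = (\<Prod>i\<in>UNIV. F (z $ i))"
proof -
  have B: "(Basis::(real^'d) set) = (\<lambda>i. axis i 1) ` UNIV"
    unfolding Basis_vec_def by auto
  have inj: "inj (\<lambda>i::'d. axis i (1::real))"
    by (auto simp: inj_def axis_eq_axis)
  show ?thesis unfolding B by (subst prod.reindex[OF inj]) (simp add: inner_axis)
qed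

lemma norm_sq_vec: "(norm (z::real^'d))^2 = (\<Sum>i\<in>UNIV. (z $ i)^2)"
  unfolding power2_norm_eq_inner inner_vec_def by (simp add: power2_eq_square)

lemma std_normal_poly_integrable:
  "integrable lborel (\<lambda>t. std_normal_density t * (1 + t^2)^2)"
proof -
  have e: "(\<lambda>t. std_normal_density t * (1 + t^2)^2) =
     (\<lambda>t. std_normal_density t * t^(2*0) + 2 * (std_normal_density t * t^(2*1)) + std_normal_density t * t^(2*2))"
    by (auto simp: power2_eq_square algebra_simps power4_eq_xxxx)
  have i: "integrable lborel (\<lambda>t. std_normal_density t * t^(2*k))" for k
    by (rule integrable.intros[OF std_normal_moment_even])
  show ?thesis unfolding e
    by (intro Bochner_Integration.integrable_add Bochner_Integration.integrable_mult_right i)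
qed

lemma gauss_m4: "(\<integral>\<^sup>+ z. ennreal (norm z ^ 4) \<partial>density lborel (std_gauss_density :: real^'d \<Rightarrow> ennreal)) < \<infinity>"
proof -
  define f where "f = (\<lambda>(b::real^'d) t. std_normal_density t * (1 + t^2)^2)"
  have "(\<integral>\<^sup>+ z. ennreal (norm z ^ 4) \<partial>density lborel (std_gauss_density :: real^'d \<Rightarrow> ennreal))
     = (\<integral>\<^sup>+ z. std_gauss_density (z::real^'d) * ennreal (norm z ^ 4) \<partial>lborel)"
    by (subst nn_integral_density) auto
  also have "\<dots> \<le> (\<integral>\<^sup>+ (z::real^'d). ennreal (\<Prod>b\<in>Basis. f b (z \<bullet> b)) \<partial>lborel)"
  proof (rule nn_integral_mono)
    fix z :: "real^'d"
    have s: "(norm z)^2 \<le> (\<Prod>i\<in>UNIV. 1 + (z $ i)^2)"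
      using sum_le_prod_1p[of UNIV "\<lambda>i. (z $ i)^2"] by (simp add: norm_sq_vec)
    have "norm z ^ 4 = ((norm z)^2)^2" by simp
    also have "\<dots> \<le> (\<Prod>i\<in>UNIV. 1 + (z $ i)^2)^2"
      using s by (intro power_mono) auto
    also have "\<dots> = (\<Prod>i\<in>UNIV. (1 + (z $ i)^2)^2)" by (simp add: prod_power_distrib)
    finally have n4: "norm z ^ 4 \<le> (\<Prod>i\<in>UNIV. (1 + (z $ i)^2)^2)" .
    have g0: "0 \<le> (\<Prod>i\<in>UNIV. std_normal_density (z $ i))" by (intro prod_nonneg) auto
    have "std_gauss_density z * ennreal (norm z ^ 4) = ennreal ((\<Prod>i\<in>UNIV. std_normal_density (z $ i)) * norm z ^ 4)"
      unfolding std_gauss_density_def using g0 by (simp add: ennreal_mult)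
    also have "\<dots> \<le> ennreal ((\<Prod>i\<in>UNIV. std_normal_density (z $ i)) * (\<Prod>i\<in>UNIV. (1 + (z $ i)^2)^2))"
      using n4 g0 by (intro ennreal_leI mult_left_mono) auto
    also have "\<dots> = ennreal (\<Prod>b\<in>Basis. f b (z \<bullet> b))"
      unfolding f_def prod_Basis_vec[of "\<lambda>t. std_normal_density t * (1 + t^2)^2"] by (simp add: prod.distrib)
    finally show "std_gauss_density z * ennreal (norm z ^ 4) \<le> ennreal (\<Prod>b\<in>Basis. f b (z \<bullet> b))" .
  qed
  also have "\<dots> = (\<integral>\<^sup>+ z. (\<Prod>b\<in>Basis. ennreal (f b (z \<bullet> b))) \<partial>lborel)"
    by (simp add: f_def prod_ennreal)
  also have "\<dots> = (\<Prod>b\<in>Basis. (\<integral>\<^sup>+ x. ennreal (f b x) \<partial>lborel))"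
    by (rule nn_integral_lborel_prod) (auto simp: f_def)
  also have "\<dots> < \<infinity>"
  proof -
    have fin: "(\<integral>\<^sup>+ x. ennreal (f b x) \<partial>lborel) < \<infinity>" for b
      using std_normal_poly_integrable unfolding f_def
      by (subst nn_integral_eq_integral) auto
    have "(\<integral>\<^sup>+ x. ennreal (f b x) \<partial>lborel) \<noteq> top" for b using fin[of b] by simp
    then have "(\<Prod>b\<in>Basis. (\<integral>\<^sup>+ x. ennreal (f b x) \<partial>lborel)) \<noteq> top"
      unfolding ennreal_prod_eq_top by blast
    then show ?thesis by (simp add: top.not_eq_extremum)
  qed
  finally show ?thesis .
qed



lemma norm_add_sq: "(norm (x + y :: 'a::real_inner))^2 = (norm x)^2 + 2 * (x \<bullet> y) + (norm y)^2"
  by (simp add: power2_norm_eq_inner inner_add_left inner_add_right inner_commute)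

lemma inner_sq_le: "((x::'a::real_inner) \<bullet> y)^2 \<le> (norm x)^2 * (norm y)^2"
proof -
  have "\<bar>x \<bullet> y\<bar> \<le> norm x * norm y" by (rule Cauchy_Schwarz_ineq2)
  then have "\<bar>x \<bullet> y\<bar>^2 \<le> (norm x * norm y)^2" by (intro power_mono) auto
  then show ?thesis by (simp add: power_mult_distrib)
qed

lemma sym_pointwise:
  fixes w z :: "'a::real_inner" and c :: real
  shows "((norm (w + c *\<^sub>R z))^4 + (norm (w + c *\<^sub>R (- z)))^4) / 2
     \<le> (norm w)^4 + 6 * c^2 * (norm w)^2 * (1 + (norm z)^4) + c^4 * (norm z)^4"
proof -
  define a where "a = (norm w)^2"
  define p where "p = w \<bullet> z"
  define q where "q = (norm z)^2"
  have pq: "p^2 \<le> a * q" unfolding a_def p_def q_def by (rule inner_sq_le)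
  have a0: "0 \<le> a" and q0: "0 \<le> q" unfolding a_def q_def by auto
  have e1: "(norm (w + c *\<^sub>R z))^2 = a + 2*c*p + c^2*q"
    unfolding a_def p_def q_def norm_add_sq by (simp add: power_mult_distrib)
  have e2: "(norm (w + c *\<^sub>R (- z)))^2 = a - 2*c*p + c^2*q"
    unfolding a_def p_def q_def norm_add_sq by (simp add: power_mult_distrib)
  have f1: "(norm (w + c *\<^sub>R z))^4 = (a + 2*c*p + c^2*q)^2"
    using e1 by (metis power_mult numeral_Bit0 numeral_One mult_2_right one_add_one power2_eq_square)
  have f2: "(norm (w + c *\<^sub>R (- z)))^4 = (a - 2*c*p + c^2*q)^2"
    using e2 by (metis power_mult numeral_Bit0 numeral_One mult_2_right one_add_one power2_eq_square)
  have id: "((a + 2*c*p + c^2*q)^2 + (a - 2*c*p + c^2*q)^2) / 2 = (a + c^2*q)^2 + 4*c^2*p^2"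
    by (simp add: power2_eq_square algebra_simps)
  define Y1 where "Y1 = c^2*p^2"
  define Y2 where "Y2 = c^2*a*q"
  define Y3 where "Y3 = c^4*q^2"
  define Y5 where "Y5 = c^2*a*q^2"
  have "c^2*p^2 \<le> c^2*(a*q)" using pq by (intro mult_left_mono) auto
  then have y1: "Y1 \<le> Y2" unfolding Y1_def Y2_def by (simp add: mult.assoc)
  have "0 \<le> (q - 1)^2" by simp
  then have "2*q \<le> q^2 + 1" by (simp add: power2_diff)
  then have "q \<le> 1 + q^2" using q0 by (simp add: power2_eq_square)
  then have "c^2*a*q \<le> c^2*a*(1 + q^2)" using a0 by (intro mult_left_mono) auto
  then have y2: "Y2 \<le> c^2*a + Y5" unfolding Y2_def Y5_def by (simp add: algebra_simps)
  have w4: "(norm w)^4 = a^2" and z4: "(norm z)^4 = q^2" unfolding a_def q_def by simp_all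
  have l: "(a + c^2*q)^2 + 4*c^2*p^2 = a^2 + 2*Y2 + Y3 + 4*Y1"
    unfolding Y1_def Y2_def Y3_def by algebra
  have r: "a^2 + 6 * c^2 * a * (1 + q^2) + c^4 * q^2 = a^2 + 6*(c^2*a) + 6*Y5 + Y3"
    unfolding Y5_def Y3_def by algebra
  have "(a + c^2*q)^2 + 4*c^2*p^2 \<le> a^2 + 6 * c^2 * a * (1 + q^2) + c^4 * q^2"
    unfolding l r using y1 y2 by linarith
  then show ?thesis unfolding f1 f2 id w4 z4 by (simp add: a_def)
qed

lemma gauss_int_bound:
  fixes w :: "real^'d" and c :: real
  defines "N \<equiv> density lborel (std_gauss_density :: real^'d \<Rightarrow> ennreal)"
  defines "M4 \<equiv> enn2real (\<integral>\<^sup>+ z. ennreal (norm z ^ 4) \<partial>N)"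
  assumes P: "prob_space N"
  shows "(\<integral>\<^sup>+ z. ennreal (norm (w + c *\<^sub>R z) ^ 4) \<partial>N)
     \<le> ennreal (norm w ^ 4 + 6*c^2*(norm w)^2*(1 + M4) + c^4 * M4)"
proof -
  interpret P: prob_space N by fact
  have "(\<integral>\<^sup>+ z. ennreal (norm z ^ 4) \<partial>N) \<noteq> top"
    using gauss_m4[where 'd='d] unfolding N_def by auto
  then have fin: "(\<integral>\<^sup>+ z. ennreal (norm z ^ 4) \<partial>N) = ennreal M4"
    unfolding M4_def by (simp add: ennreal_enn2real_if)
  have M40: "0 \<le> M4" unfolding M4_def by simp
  define f where "f z = ennreal (norm (w + c *\<^sub>R z) ^ 4)" for z :: "real^'d"
  have fm[measurable]: "f \<in> borel_measurable borel" unfolding f_def by measurable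
  have sN[simp, measurable_cong]: "sets N = sets borel" unfolding N_def by simp
  have sym: "(\<integral>\<^sup>+ z. f (- z) \<partial>N) = (\<integral>\<^sup>+ z. f z \<partial>N)"
    unfolding N_def by (rule gauss_nn_sym) (rule fm)
  define A where "A = norm w ^ 4 + 6*c^2*(norm w)^2"
  define Bc where "Bc = 6*c^2*(norm w)^2 + c^4"
  have A0: "0 \<le> A" and B0: "0 \<le> Bc" unfolding A_def Bc_def by auto
  have fmN: "f \<in> borel_measurable N" using fm by (simp add: measurable_cong_sets[OF sN refl])
  have "(\<lambda>z. f (- z)) \<in> borel_measurable borel" by measurable
  then have fmN': "(\<lambda>z. f (- z)) \<in> borel_measurable N" by (simp add: measurable_cong_sets[OF sN refl])
  have "2 * (\<integral>\<^sup>+ z. f z \<partial>N) = (\<integral>\<^sup>+ z. f z \<partial>N) + (\<integral>\<^sup>+ z. f (- z) \<partial>N)"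
    using sym by (simp add: mult_2)
  also have "\<dots> = (\<integral>\<^sup>+ z. f z + f (- z) \<partial>N)"
    by (rule nn_integral_add[symmetric, OF fmN fmN'])
  also have "\<dots> \<le> (\<integral>\<^sup>+ z. 2 * ennreal (A + Bc * norm z ^ 4) \<partial>N)"
  proof (rule nn_integral_mono)
    fix z :: "real^'d"
    have "f z + f (- z) = ennreal (norm (w + c *\<^sub>R z) ^ 4 + norm (w + c *\<^sub>R (- z)) ^ 4)"
      unfolding f_def by (simp add: ennreal_plus)
    also have "\<dots> \<le> ennreal (2 * (A + Bc * norm z ^ 4))"
      using sym_pointwise[of w c z] unfolding A_def Bc_def
      by (intro ennreal_leI) (simp add: algebra_simps)
    also have "\<dots> = 2 * ennreal (A + Bc * norm z ^ 4)"
      by (subst ennreal_mult) (use A0 B0 in auto)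
    finally show "f z + f (- z) \<le> 2 * ennreal (A + Bc * norm z ^ 4)" .
  qed
  also have "\<dots> = 2 * (\<integral>\<^sup>+ z. ennreal (A + Bc * norm z ^ 4) \<partial>N)"
    by (rule nn_integral_cmult) measurable
  finally have le: "(\<integral>\<^sup>+ z. f z \<partial>N) \<le> (\<integral>\<^sup>+ z. ennreal (A + Bc * norm z ^ 4) \<partial>N)"
    by (subst (asm) ennreal_mult_le_mult_iff) auto
  have "(\<integral>\<^sup>+ z. ennreal (A + Bc * norm z ^ 4) \<partial>N) = (\<integral>\<^sup>+ z. ennreal A + ennreal Bc * ennreal (norm z ^ 4) \<partial>N)"
    using A0 B0 by (intro nn_integral_cong) (simp add: ennreal_plus ennreal_mult)
  also have "\<dots> = ennreal A + ennreal Bc * (\<integral>\<^sup>+ z. ennreal (norm z ^ 4) \<partial>N)"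
    apply (subst nn_integral_add)
      apply measurable
    apply (subst nn_integral_cmult)
     apply measurable
    apply (simp add: P.emeasure_space_1)
    done
  also have "\<dots> = ennreal (A + Bc * M4)"
    using A0 B0 M40 by (simp add: fin ennreal_plus ennreal_mult)
  also have "A + Bc * M4 = norm w ^ 4 + 6*c^2*(norm w)^2*(1 + M4) + c^4 * M4"
    unfolding A_def Bc_def by (simp add: algebra_simps)
  finally show ?thesis using le unfolding f_def by simp
qed

lemma law_pointwise:
  fixes v d :: "'a::real_inner" and h T R :: real
  assumes h0: "0 \<le> h" and T0: "0 \<le> T"
  shows "norm (v + h *\<^sub>R d) ^ 4 + T * (norm (v + h *\<^sub>R d))^2 + R
    \<le> ((norm v)^2^2 + T * (norm v)^2 + R) + (8*h^2*(norm v)^2 + T*h^2) * (norm d)^2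
       + 3*h^4 * norm d ^ 4 + (4*h*(norm v)^2 + 2*T*h) * (v \<bullet> d)"
proof -
  define a where "a = (norm v)^2"
  define p where "p = v \<bullet> d"
  define Bq where "Bq = (norm d)^2"
  have pq: "p^2 \<le> a * Bq" unfolding a_def p_def Bq_def by (rule inner_sq_le)
  have S: "(norm (v + h *\<^sub>R d))^2 = a + 2*h*p + h^2*Bq"
    unfolding a_def p_def Bq_def norm_add_sq by (simp add: power_mult_distrib)
  have S4: "norm (v + h *\<^sub>R d) ^ 4 = (a + 2*h*p + h^2*Bq)^2"
    using S by (metis power_mult numeral_Bit0 numeral_One mult_2_right)
  have d4: "norm d ^ 4 = Bq^2" unfolding Bq_def by simp
  have v4: "(norm v)^2^2 = a^2" unfolding a_def by simp
  define X1 where "X1 = h^2*p^2"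
  define X2 where "X2 = h^2*a*Bq"
  define X3 where "X3 = h^4*Bq^2"
  define X4 where "X4 = h^3*p*Bq"
  have expand: "(a + 2*h*p + h^2*Bq)^2 + T*(a + 2*h*p + h^2*Bq) + R
     = a^2 + T*a + R + (4*h*a + 2*T*h)*p + T*h^2*Bq + (4*X1 + X3 + 2*X2 + 4*X4)"
    unfolding X1_def X2_def X3_def X4_def by algebra
  have rhs: "(a^2 + T*a + R) + (8*h^2*a + T*h^2)*Bq + 3*h^4*Bq^2 + (4*h*a + 2*T*h)*p
     = a^2 + T*a + R + (4*h*a + 2*T*h)*p + T*h^2*Bq + (8*X2 + 3*X3)"
    unfolding X1_def X2_def X3_def X4_def by algebra
  have i1: "X1 \<le> X2"
  proof -
    have "h^2*p^2 \<le> h^2*(a*Bq)" using pq by (intro mult_left_mono) auto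
    then show ?thesis unfolding X1_def X2_def by (simp add: mult.assoc)
  qed
  have i2: "4*X4 \<le> 2*X1 + 2*X3"
  proof -
    have "0 \<le> 2*h^2*(p - h*Bq)^2" by simp
    moreover have "2*h^2*(p - h*Bq)^2 = 2*X1 + 2*X3 - 4*X4"
      unfolding X1_def X3_def X4_def by algebra
    ultimately show ?thesis by linarith
  qed
  have "(a + 2*h*p + h^2*Bq)^2 + T*(a + 2*h*p + h^2*Bq) + R
      \<le> (a^2 + T*a + R) + (8*h^2*a + T*h^2)*Bq + 3*h^4*Bq^2 + (4*h*a + 2*T*h)*p"
    unfolding expand rhs using i1 i2 by linarith
  then show ?thesis unfolding S4 S d4 v4 a_def[symmetric] p_def[symmetric] Bq_def[symmetric] .
qed



lemma sq_le_1_4: "(x::real)^2 \<le> 1 + x^4"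
proof -
  have "0 \<le> (x^2 - 1)^2" by simp
  then have "2*x^2 \<le> x^4 + 1" by (simp add: power2_diff power_mult[symmetric])
  moreover have "0 \<le> x^2" by simp
  ultimately show ?thesis by linarith
qed

lemma law_int_bound:
  fixes D :: "'u \<Rightarrow> 'a::euclidean_space" and v :: 'a
  assumes L: "prob_space L" and iD: "integrable L D" and D0: "integral\<^sup>L L D = 0"
    and i4: "integrable L (\<lambda>u. norm (D u) ^ 4)" and h0: "0 \<le> h" and T0: "0 \<le> T" and R0: "0 \<le> R"
  shows "(\<integral>\<^sup>+ u. ennreal (norm (v + h *\<^sub>R D u) ^ 4 + T * (norm (v + h *\<^sub>R D u))^2 + R) \<partial>L)
    \<le> ennreal (((norm v)^2^2 + T*(norm v)^2 + R) + (8*h^2*(norm v)^2 + T*h^2) * (\<integral>u. (norm (D u))^2 \<partial>L)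
          + 3*h^4 * (\<integral>u. norm (D u)^4 \<partial>L))"
proof -
  interpret L: prob_space L by fact
  have Dm[measurable]: "D \<in> borel_measurable L" using iD by (rule borel_measurable_integrable)
  have i2: "integrable L (\<lambda>u. (norm (D u))^2)"
  proof (rule Bochner_Integration.integrable_bound[where f="\<lambda>u. 1 + norm (D u) ^ 4"])
    show "integrable L (\<lambda>u. 1 + norm (D u) ^ 4)"
      by (intro Bochner_Integration.integrable_add L.integrable_const i4)
    show "(\<lambda>u. (norm (D u))^2) \<in> borel_measurable L" by measurable
    show "AE x in L. norm ((norm (D x))^2) \<le> norm (1 + norm (D x) ^ 4)"
      using sq_le_1_4 by (intro AE_I2) (simp add: add_nonneg_nonneg)
  qed
  define K0 where "K0 = (norm v)^2^2 + T*(norm v)^2 + R"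
  define K1 where "K1 = 8*h^2*(norm v)^2 + T*h^2"
  define K2 where "K2 = 3*h^4"
  define \<alpha> where "\<alpha> = 4*h*(norm v)^2 + 2*T*h"
  define G where "G u = K0 + K1 * (norm (D u))^2 + K2 * norm (D u)^4 + \<alpha> * (v \<bullet> D u)" for u
  have iG: "integrable L G" unfolding G_def
    by (intro Bochner_Integration.integrable_add Bochner_Integration.integrable_mult_right
          L.integrable_const i2 i4 integrable_inner_right iD)
  have intG: "integral\<^sup>L L G = K0 + K1 * (\<integral>u. (norm (D u))^2 \<partial>L) + K2 * (\<integral>u. norm (D u)^4 \<partial>L)"
  proof -
    have "integral\<^sup>L L G = K0 + K1 * (\<integral>u. (norm (D u))^2 \<partial>L) + K2 * (\<integral>u. norm (D u)^4 \<partial>L) + \<alpha> * (v \<bullet> integral\<^sup>L L D)"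
    proof -
      have a1: "integrable L (\<lambda>u. K1 * (norm (D u))^2)" by (intro Bochner_Integration.integrable_mult_right i2)
      have a2: "integrable L (\<lambda>u. K2 * norm (D u)^4)" by (intro Bochner_Integration.integrable_mult_right i4)
      have a3: "integrable L (\<lambda>u. \<alpha> * (v \<bullet> D u))" by (intro Bochner_Integration.integrable_mult_right integrable_inner_right iD)
      have s1: "integrable L (\<lambda>u. K0 + K1 * (norm (D u))^2)" by (intro Bochner_Integration.integrable_add L.integrable_const a1)
      have s2: "integrable L (\<lambda>u. K0 + K1 * (norm (D u))^2 + K2 * norm (D u)^4)" by (intro Bochner_Integration.integrable_add s1 a2)
      show ?thesis unfolding G_def
        apply (subst Bochner_Integration.integral_add[OF s2 a3])
        apply (subst Bochner_Integration.integral_add[OF s1 a2])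
        apply (subst Bochner_Integration.integral_add[OF L.integrable_const a1])
        apply (simp add: i2 i4 iD L.prob_space)
        done
    qed
    then show ?thesis using D0 by simp
  qed
  have pw: "norm (v + h *\<^sub>R D u) ^ 4 + T * (norm (v + h *\<^sub>R D u))^2 + R \<le> G u" for u
    using law_pointwise[OF h0 T0, of v "D u" R] unfolding G_def K0_def K1_def K2_def \<alpha>_def by simp
  have G0: "0 \<le> G u" for u
    using pw[of u] T0 R0 by (smt (verit) zero_le_power mult_nonneg_nonneg norm_ge_zero zero_le_power2)
  have "(\<integral>\<^sup>+ u. ennreal (norm (v + h *\<^sub>R D u) ^ 4 + T * (norm (v + h *\<^sub>R D u))^2 + R) \<partial>L)
      \<le> (\<integral>\<^sup>+ u. ennreal (G u) \<partial>L)"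
    by (intro nn_integral_mono ennreal_leI pw)
  also have "\<dots> = ennreal (integral\<^sup>L L G)"
    using iG G0 by (intro nn_integral_eq_integral) auto
  finally show ?thesis unfolding intG K0_def K1_def K2_def .
qed



lemma young_K:
  fixes K n m :: real
  assumes K: "0 < K"
  shows "n * m \<le> K/4 * n^2 + m^2/K"
proof -
  have "0 \<le> (K*n - 2*m)^2" by simp
  moreover have "(K*n - 2*m)^2 = K^2*n^2 - 4*K*(n*m) + 4*m^2" by algebra
  ultimately have "4*K*(n*m) \<le> K^2*n^2 + 4*m^2" by linarith
  then have "n*m \<le> (K^2*n^2 + 4*m^2) / (4*K)" using K by (simp add: pos_le_divide_eq mult.commute mult.left_commute)
  also have "(K^2*n^2 + 4*m^2) / (4*K) = K/4 * n^2 + m^2/K" using K by (simp add: field_simps power2_eq_square)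
  finally show ?thesis .
qed

lemma Q_bound:
  fixes y :: "'a::real_inner" and a :: "'a \<Rightarrow> 'a"
  assumes K: "0 < K" and Lp: "0 \<le> Lp"
    and mono: "(y - 0) \<bullet> (a y - a 0) \<le> - K * (norm (y - 0))^2"
    and lip: "norm (a y - a 0) \<le> Lp * norm (y - 0)"
    and h0: "0 \<le> h" and h1: "h \<le> 1" and hL: "4 * Lp^2 * h \<le> K"
  shows "(norm (y + h *\<^sub>R a y))^2 \<le> (1 - K*h) * (norm y)^2 + h * (2*(norm (a 0))^2/K + 2*(norm (a 0))^2)"
proof -
  define n where "n = norm y"
  define m where "m = norm (a 0)"
  define Y where "Y = n^2"
  have n0: "0 \<le> n" and m0: "0 \<le> m" unfolding n_def m_def by auto
  have e: "(norm (y + h *\<^sub>R a y))^2 = Y + 2*h*(y \<bullet> a y) + h^2*(norm (a y))^2"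
    unfolding norm_add_sq Y_def n_def by (simp add: power_mult_distrib)
  have ip: "y \<bullet> a y \<le> -K*Y + n*m"
  proof -
    have "y \<bullet> a y = y \<bullet> (a y - a 0) + y \<bullet> a 0" by (simp add: inner_diff_right)
    moreover have "y \<bullet> a 0 \<le> n*m" unfolding n_def m_def by (rule norm_cauchy_schwarz)
    ultimately show ?thesis using mono unfolding Y_def n_def by simp
  qed
  have ay: "norm (a y) \<le> m + Lp*n"
  proof -
    have "norm (a y) \<le> norm (a y - a 0) + norm (a 0)" using norm_triangle_ineq[of "a y - a 0" "a 0"] by simp
    then show ?thesis using lip unfolding m_def n_def by simp
  qed
  have ay2: "(norm (a y))^2 \<le> 2*m^2 + 2*Lp^2*Y"
  proof -
    have "(norm (a y))^2 \<le> (m + Lp*n)^2" using ay by (intro power_mono) auto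
    also have "\<dots> \<le> 2*m^2 + 2*Lp^2*Y"
    proof -
      have "0 \<le> (m - Lp*n)^2" by simp
      moreover have "(m + Lp*n)^2 + (m - Lp*n)^2 = 2*m^2 + 2*Lp^2*Y" unfolding Y_def by algebra
      ultimately show ?thesis by linarith
    qed
    finally show ?thesis .
  qed
  have yg: "n*m \<le> K/4*Y + m^2/K" unfolding Y_def by (rule young_K[OF K])
  define hY where "hY = h*Y"
  have t1: "2*h*(y \<bullet> a y) \<le> -2*K*hY + 2*h*(n*m)"
  proof -
    have "2*h*(y \<bullet> a y) \<le> 2*h*(-K*Y + n*m)" using ip h0 by (intro mult_left_mono) auto
    then show ?thesis unfolding hY_def by (simp add: algebra_simps)
  qed
  have t2: "2*h*(n*m) \<le> K/2*hY + 2*h*(m^2/K)"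
  proof -
    have "2*h*(n*m) \<le> 2*h*(K/4*Y + m^2/K)" using yg h0 by (intro mult_left_mono) auto
    then show ?thesis unfolding hY_def by (simp add: algebra_simps)
  qed
  have t3: "h^2*(norm (a y))^2 \<le> 2*h^2*m^2 + 2*Lp^2*h*hY"
  proof -
    have "h^2*(norm (a y))^2 \<le> h^2*(2*m^2 + 2*Lp^2*Y)" using ay2 by (intro mult_left_mono) auto
    then show ?thesis unfolding hY_def by (simp add: algebra_simps power2_eq_square)
  qed
  have t4: "2*Lp^2*h*hY \<le> K/2*hY"
  proof -
    have "0 \<le> hY" unfolding hY_def Y_def using h0 by simp
    then have "(4*Lp^2*h)*hY \<le> K*hY" using hL by (intro mult_right_mono) auto
    then show ?thesis by (simp add: algebra_simps)
  qed
  have t5: "2*h^2*m^2 \<le> 2*h*m^2"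
  proof -
    have "h^2 \<le> h" using h0 h1 by (simp add: power2_eq_square mult_left_le_one_le)
    then show ?thesis by (intro mult_left_mono mult_right_mono) auto
  qed
  have fin: "(1 - K*h) * Y + h * (2*m^2/K + 2*m^2) = Y - K*hY + 2*h*(m^2/K) + 2*h*m^2"
    unfolding hY_def by (simp add: algebra_simps)
  have "(norm (y + h *\<^sub>R a y))^2 \<le> (1 - K*h) * Y + h * (2*m^2/K + 2*m^2)"
    unfolding e fin using t1 t2 t3 t4 t5 by linarith
  then show ?thesis unfolding Y_def n_def m_def .
qed



lemma Phi_bound:
  fixes K A0 k2 k4 bb M4 h Y Q m2 m4 :: real
  defines "C6 \<equiv> 6*bb*(1+M4)"
  defines "E1 \<equiv> 8*A0 + C6"
  defines "B1 \<equiv> 2*A0 + C6"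
  defines "B2 \<equiv> k2*(16 + 2*E1) + 3*k4"
  defines "B3 \<equiv> A0^2 + C6*A0 + bb^2*M4"
  assumes K: "0 < K" and A0: "0 \<le> A0" and k2: "0 \<le> k2" and k4: "0 \<le> k4" and bb: "0 \<le> bb"
    and M4: "0 \<le> M4" and Y: "0 \<le> Y" and h0: "0 \<le> h" and h1: "h \<le> 1" and hK: "K*h \<le> 1"
    and hB2: "4*h*B2 \<le> K"
    and Q0: "0 \<le> Q" and Q: "Q \<le> (1 - K*h)*Y + h*A0"
    and m20: "0 \<le> m2" and m2: "m2 \<le> k2*(1+Y)" and m40: "0 \<le> m4" and m4: "m4 \<le> k4*(1+Y^2)"
  shows "Q^2 + (6*(bb*h)*(1+M4))*Q + (bb*h)^2*M4 + (8*h^2*Q + (6*(bb*h)*(1+M4))*h^2)*m2 + 3*h^4*m4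
     \<le> (1 - K*h/2)*Y^2 + h*(B1^2/K + B2 + B3)"
proof -
  define W where "W = Y^2"
  define KhW where "KhW = K*h*W"
  define A0hY where "A0hY = A0*h*Y"
  define C6hY where "C6hY = C6*h*Y"
  define T where "T = 6*(bb*h)*(1+M4)"
  have C60: "0 \<le> C6" unfolding C6_def using bb M4 by simp
  have E10: "0 \<le> E1" unfolding E1_def using A0 C60 by simp
  have W0: "0 \<le> W" unfolding W_def by simp
  have u0: "0 \<le> 1 - K*h" and u1: "1 - K*h \<le> 1" using hK K h0 by auto
  have hh: "h^2 \<le> h" using h0 h1 by (simp add: power2_eq_square mult_left_le_one_le)
  have s1: "Q^2 \<le> W - KhW + 2*A0hY + h*A0^2"
  proof -
    have "Q^2 \<le> ((1 - K*h)*Y + h*A0)^2" using Q Q0 by (intro power_mono) auto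
    moreover have "((1 - K*h)*Y + h*A0)^2 = (1 - K*h)^2*W + 2*((1 - K*h)*(A0*h*Y)) + h^2*A0^2"
      unfolding W_def by algebra
    moreover have "(1 - K*h)^2*W \<le> (1 - K*h)*W"
    proof -
      have "(1 - K*h)^2 \<le> (1 - K*h)" using u0 u1 by (simp add: power2_eq_square mult_left_le_one_le)
      then show ?thesis using W0 by (intro mult_right_mono) auto
    qed
    moreover have "(1 - K*h)*(A0*h*Y) \<le> A0*h*Y"
      using u0 u1 A0 h0 Y by (intro mult_left_le_one_le) auto
    moreover have "h^2*A0^2 \<le> h*A0^2" using hh by (intro mult_right_mono) auto
    moreover have "(1 - K*h)*W = W - KhW" unfolding KhW_def by (simp add: algebra_simps)
    ultimately show ?thesis unfolding A0hY_def by linarith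
  qed
  have QY: "Q \<le> Y + A0"
  proof -
    have "(1 - K*h)*Y \<le> Y" using u0 u1 Y by (intro mult_left_le_one_le) auto
    moreover have "h*A0 \<le> A0" using h1 A0 by (intro mult_left_le_one_le) (auto simp: h0)
    ultimately show ?thesis using Q by linarith
  qed
  have s2: "T*Q \<le> C6hY + h*(C6*A0)"
  proof -
    have T': "T = C6*h" unfolding T_def C6_def by (simp add: algebra_simps)
    have "T*Q \<le> T*(Y + A0)" using QY unfolding T' using C60 h0 by (intro mult_left_mono) auto
    then show ?thesis unfolding T' C6hY_def by (simp add: algebra_simps)
  qed
  have s3: "(bb*h)^2*M4 \<le> h*(bb^2*M4)"
  proof -
    have "h^2*(bb^2*M4) \<le> h*(bb^2*M4)" using hh bb M4 by (intro mult_right_mono) auto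
    then show ?thesis by (simp add: power_mult_distrib algebra_simps)
  qed
  have s4: "(8*h^2*Q + T*h^2)*m2 + 3*h^4*m4 \<le> h^2*B2*(1 + W)"
  proof -
    have a: "8*Q + T \<le> 8*Y + E1"
    proof -
      have "T = h*C6" unfolding T_def C6_def by (simp add: algebra_simps)
      also have "h*C6 \<le> C6" using h0 h1 C60 by (intro mult_left_le_one_le) auto
      finally have "T \<le> C6" .
      then show ?thesis using QY unfolding E1_def by linarith
    qed
    have b: "(8*Y + E1)*(1 + Y) \<le> (16 + 2*E1)*(1 + W)"
    proof -
      have "0 \<le> (Y - 1)^2" by simp
      then have "2*Y \<le> Y^2 + 1" by (simp add: power2_diff)
      then have yw: "Y \<le> 1 + W" unfolding W_def using Y by (simp add: power2_eq_square)
      have "(8*Y + E1)*(1 + Y) = 8*W + (8 + E1)*Y + E1" unfolding W_def by algebra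
      also have "\<dots> \<le> 8*W + (8 + E1)*(1 + W) + E1" using yw E10 by (intro add_mono mult_left_mono) auto
      also have "\<dots> \<le> (16 + 2*E1)*(1 + W)" using E10 W0 by (simp add: algebra_simps)
      finally show ?thesis .
    qed
    have c: "(8*h^2*Q + T*h^2)*m2 \<le> h^2*(k2*(16 + 2*E1))*(1 + W)"
    proof -
      have e: "(8*h^2*Q + T*h^2)*m2 = h^2*((8*Q + T)*m2)" by (simp add: algebra_simps)
      have x1: "(8*Q + T)*m2 \<le> (8*Y + E1)*(k2*(1+Y))"
        using a m2 m20 Q0 Y E10 by (intro mult_mono) (auto simp: T_def)
      have x2: "(8*Y + E1)*(k2*(1+Y)) = k2*((8*Y + E1)*(1 + Y))" by (simp add: algebra_simps)
      have x3: "k2*((8*Y + E1)*(1 + Y)) \<le> k2*((16 + 2*E1)*(1 + W))" using b k2 by (intro mult_left_mono) auto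
      have "(8*Q + T)*m2 \<le> k2*((16 + 2*E1)*(1 + W))" using x1 x2 x3 by linarith
      then have "h^2*((8*Q + T)*m2) \<le> h^2*(k2*((16 + 2*E1)*(1 + W)))" by (intro mult_left_mono) auto
      then show ?thesis unfolding e by (simp add: algebra_simps)
    qed
    have d: "3*h^4*m4 \<le> h^2*(3*k4)*(1 + W)"
    proof -
      have "h^4 \<le> h^2" using h0 h1 by (simp add: power_decreasing)
      then have "3*h^4*m4 \<le> 3*h^2*m4" using m40 by (intro mult_right_mono) auto
      also have "\<dots> \<le> 3*h^2*(k4*(1+W))" using m4 unfolding W_def by (intro mult_left_mono) auto
      finally show ?thesis by (simp add: algebra_simps)
    qed
    show ?thesis using c d unfolding B2_def by (simp add: algebra_simps)
  qed
  have s5: "h^2*B2*(1 + W) \<le> KhW/4 + h*B2"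
  proof -
    have B20: "0 \<le> B2" unfolding B2_def using k2 k4 E10 by simp
    have "h^2*B2*W = h*((h*B2)*W)" by (simp add: algebra_simps power2_eq_square)
    also have "\<dots> \<le> h*((K/4)*W)" using hB2 W0 h0 by (intro mult_left_mono mult_right_mono) auto
    finally have x: "h^2*B2*W \<le> KhW/4" unfolding KhW_def by (simp add: algebra_simps)
    have "h^2*B2 \<le> h*B2" using hh B20 by (intro mult_right_mono) auto
    then show ?thesis using x by (simp add: algebra_simps)
  qed
  have s6: "h*(B1*Y) \<le> KhW/4 + h*(B1^2/K)"
  proof -
    have "B1*Y \<le> K/4*Y^2 + B1^2/K" using young_K[OF K, of Y B1] by (simp add: mult.commute)
    then have "h*(B1*Y) \<le> h*(K/4*Y^2 + B1^2/K)" using h0 by (intro mult_left_mono) auto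
    then show ?thesis unfolding KhW_def W_def by (simp add: algebra_simps)
  qed
  have e6: "h*(B1*Y) = 2*A0hY + C6hY" unfolding B1_def A0hY_def C6hY_def by (simp add: algebra_simps)
  have eR: "(1 - K*h/2)*Y^2 + h*(B1^2/K + B2 + B3) = W - KhW/2 + h*(B1^2/K) + h*B2 + (h*A0^2 + h*(C6*A0) + h*(bb^2*M4))"
    unfolding W_def KhW_def B3_def by (simp add: algebra_simps)
  have eL: "Q^2 + (6*(bb*h)*(1+M4))*Q + (bb*h)^2*M4 + (8*h^2*Q + (6*(bb*h)*(1+M4))*h^2)*m2 + 3*h^4*m4
     = Q^2 + T*Q + (bb*h)^2*M4 + ((8*h^2*Q + T*h^2)*m2 + 3*h^4*m4)" unfolding T_def by simp
  show ?thesis unfolding eL eR using s1 s2 s3 s4 s5 s6 e6 by linarith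
qed



lemma y_bound:
  fixes a :: "real^'d \<Rightarrow> real^'d" and b :: "real^'d \<Rightarrow> real^'n \<Rightarrow> real^'d" and Lw :: "(real^'n) measure"
    and y :: "real^'d" and K Lp h \<beta> \<sigma> k4 :: real
  defines "Nd \<equiv> density lborel (std_gauss_density :: real^'d \<Rightarrow> ennreal)"
  defines "M4 \<equiv> enn2real (\<integral>\<^sup>+ z. ennreal (norm z ^ 4) \<partial>Nd)"
  defines "A0 \<equiv> 2*(norm (a 0))^2/K + 2*(norm (a 0))^2"
  defines "k2 \<equiv> (k4 + 1)/2"
  defines "bb \<equiv> \<beta>^2"
  defines "C6 \<equiv> 6*bb*(1+M4)"
  defines "E1 \<equiv> 8*A0 + C6"
  defines "B1 \<equiv> 2*A0 + C6"
  defines "B2 \<equiv> k2*(16 + 2*E1) + 3*k4"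
  defines "B3 \<equiv> A0^2 + C6*A0 + bb^2*M4"
  assumes Nprob: "prob_space Nd"
    and Lprob: "prob_space Lw" and Lsets: "sets Lw = sets borel"
    and b_meas: "(\<lambda>(x, u). b x u) \<in> borel_measurable borel"
    and unb: "integrable Lw (b y)" "(\<integral>u. b y u \<partial>Lw) = a y"
    and A4y: "(\<integral>\<^sup>+ u. ennreal ((norm (b y u - a y))^4) \<partial>Lw) \<le> ennreal (\<sigma> * (1 + (norm y)^4))"
    and \<sigma>k: "\<sigma> \<le> k4" and k40: "0 \<le> k4"
    and K: "0 < K" and Lp: "0 \<le> Lp"
    and mono: "(y - 0) \<bullet> (a y - a 0) \<le> - K * (norm (y - 0))^2"
    and lip: "norm (a y - a 0) \<le> Lp * norm (y - 0)"
    and h0: "0 < h" and h1: "h \<le> 1" and hK: "K*h \<le> 1" and hL: "4 * Lp^2 * h \<le> K" and hB2: "4*h*B2 \<le> K"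
  shows "(\<integral>\<^sup>+ u. \<integral>\<^sup>+ z. ennreal (norm (y + h *\<^sub>R b y u + (\<beta> * sqrt h) *\<^sub>R z) ^ 4) \<partial>Nd \<partial>Lw)
     \<le> ennreal ((1 - K*h/2)*(norm y)^4 + h*(B1^2/K + B2 + B3))"
proof -
  interpret L: prob_space Lw by fact
  define c where "c = \<beta> * sqrt h"
  have c2: "c^2 = bb*h" unfolding c_def bb_def using h0 by (simp add: power_mult_distrib)
  have c4: "c^4 = (bb*h)^2" using c2 by (metis power_mult numeral_Bit0 numeral_One mult_2_right)
  have M40: "0 \<le> M4" unfolding M4_def by simp
  define T where "T = 6*c^2*(1+M4)"
  define R where "R = c^4*M4"
  have T0: "0 \<le> T" unfolding T_def using M40 by simp
  have R0: "0 \<le> R" unfolding R_def using M40 by simp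
  define D where "D u = b y u - a y" for u
  define v where "v = y + h *\<^sub>R a y"
  have bym: "(\<lambda>u. b y u) \<in> borel_measurable borel"
  proof -
    have bm: "(\<lambda>(x, u). b x u) \<in> borel_measurable (borel \<Otimes>\<^sub>M borel)" using b_meas by (simp add: borel_prod)
    have "(\<lambda>u. (\<lambda>(x, u). b x u) (y, u)) \<in> borel_measurable borel"
      by (rule measurable_compose[OF measurable_Pair[OF measurable_const measurable_ident_sets[OF refl]] bm]) simp
    then show ?thesis by simp
  qed
  have Dm[measurable]: "D \<in> borel_measurable Lw"
    unfolding D_def using bym by (simp add: measurable_cong_sets[OF Lsets refl])
  have iD: "integrable Lw D" unfolding D_def
    by (intro Bochner_Integration.integrable_diff unb(1) L.integrable_const)
  have D0: "integral\<^sup>L Lw D = 0" unfolding D_def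
    using unb by (simp add: Bochner_Integration.integral_diff[OF unb(1) L.integrable_const] L.prob_space)
  have fin4: "(\<integral>\<^sup>+ u. ennreal (norm (D u) ^ 4) \<partial>Lw) < \<infinity>"
    using A4y unfolding D_def by (simp add: le_less_trans[OF _ ennreal_less_top])
  have i4: "integrable Lw (\<lambda>u. norm (D u) ^ 4)"
    by (rule integrableI_nonneg) (use fin4 in auto)
  have i2: "integrable Lw (\<lambda>u. (norm (D u))^2)"
  proof (rule Bochner_Integration.integrable_bound[where f="\<lambda>u. 1 + norm (D u) ^ 4"])
    show "integrable Lw (\<lambda>u. 1 + norm (D u) ^ 4)"
      by (intro Bochner_Integration.integrable_add L.integrable_const i4)
    show "(\<lambda>u. (norm (D u))^2) \<in> borel_measurable Lw" by measurable
    show "AE x in Lw. norm ((norm (D x))^2) \<le> norm (1 + norm (D x) ^ 4)"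
      using sq_le_1_4 by (intro AE_I2) (simp add: add_nonneg_nonneg)
  qed
  define m2 where "m2 = (\<integral>u. (norm (D u))^2 \<partial>Lw)"
  define m4 where "m4 = (\<integral>u. norm (D u)^4 \<partial>Lw)"
  define Y where "Y = (norm y)^2"
  have Y0: "0 \<le> Y" unfolding Y_def by simp
  have m40: "0 \<le> m4" unfolding m4_def by (intro integral_nonneg_AE) auto
  have m20: "0 \<le> m2" unfolding m2_def by (intro integral_nonneg_AE) auto
  have m4b: "m4 \<le> k4*(1 + Y^2)"
  proof -
    have "ennreal m4 = (\<integral>\<^sup>+ u. ennreal (norm (D u) ^ 4) \<partial>Lw)"
      unfolding m4_def by (rule nn_integral_eq_integral[symmetric]) (use i4 in auto)
    also have "\<dots> \<le> ennreal (\<sigma> * (1 + (norm y)^4))" using A4y unfolding D_def .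
    finally have e: "ennreal m4 \<le> ennreal (\<sigma> * (1 + (norm y)^4))" .
    have Y2: "Y^2 = (norm y)^4" unfolding Y_def by simp
    have kk: "\<sigma> * (1 + (norm y)^4) \<le> k4 * (1 + (norm y)^4)" using \<sigma>k by (intro mult_right_mono) auto
    show ?thesis
    proof (cases "0 \<le> \<sigma> * (1 + (norm y)^4)")
      case True then show ?thesis using e kk Y2 by simp
    next
      case False
      then have z: "ennreal (\<sigma> * (1 + (norm y)^4)) = 0" by (simp add: ennreal_neg)
      have "ennreal m4 \<le> 0" using e unfolding z .
      then have "ennreal m4 = 0" by (simp add: le_zero_eq)
      then have "m4 \<le> 0" by (simp only: ennreal_eq_0_iff)
      moreover have "0 \<le> k4*(1 + Y^2)" using k40 by simp
      ultimately show ?thesis by linarith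
    qed
  qed
  have m2b: "m2 \<le> k2*(1 + Y)"
  proof -
    define r where "r = 1 + Y"
    have r0: "0 < r" unfolding r_def using Y0 by simp
    have pw: "(norm (D u))^2 \<le> (norm (D u)^4/r + r)/2" for u
    proof -
      have "0 \<le> ((norm (D u))^2 - r)^2" by simp
      then have "2*r*(norm (D u))^2 \<le> norm (D u)^4 + r^2"
        by (simp add: power2_diff power_mult[symmetric] algebra_simps)
      then show ?thesis using r0 by (simp add: field_simps power2_eq_square)
    qed
    have "m2 \<le> (\<integral>u. (norm (D u)^4/r + r)/2 \<partial>Lw)"
      unfolding m2_def using i2 i4 pw
      by (intro integral_mono) (auto intro!: Bochner_Integration.integrable_divide Bochner_Integration.integrable_add L.integrable_const)
    also have "(\<integral>u. (norm (D u)^4/r + r)/2 \<partial>Lw) = (m4/r + r)/2"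
      unfolding m4_def using i4
      by (simp add: Bochner_Integration.integral_add[OF Bochner_Integration.integrable_divide[OF i4] L.integrable_const] L.prob_space)
    also have "m4/r \<le> k4 * r"
    proof -
      have "m4 \<le> k4 * r^2"
      proof -
        have "1 + Y^2 \<le> r^2" unfolding r_def using Y0 by (simp add: power2_eq_square algebra_simps)
        then have "k4*(1 + Y^2) \<le> k4*r^2" using k40 by (intro mult_left_mono) auto
        then show ?thesis using m4b by linarith
      qed
      then show ?thesis using r0 by (simp add: divide_le_eq power2_eq_square mult.assoc)
    qed
    then have "m4/r + r \<le> k4*r + r" by (rule add_right_mono)
    then have "(m4/r + r)/2 \<le> (k4*r + r)/2" by (rule divide_right_mono) simp
    also have "(k4*r + r)/2 = k2*(1 + Y)" unfolding k2_def r_def by (simp add: algebra_simps)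
    finally show ?thesis by simp
  qed
  define Q where "Q = (norm v)^2"
  have Q0: "0 \<le> Q" unfolding Q_def by simp
  have Qb: "Q \<le> (1 - K*h)*Y + h*A0"
    unfolding Q_def v_def Y_def A0_def using Q_bound[OF K Lp mono lip _ h1 hL] h0 by simp
  have "(\<integral>\<^sup>+ u. \<integral>\<^sup>+ z. ennreal (norm (y + h *\<^sub>R b y u + (\<beta> * sqrt h) *\<^sub>R z) ^ 4) \<partial>Nd \<partial>Lw)
     \<le> (\<integral>\<^sup>+ u. ennreal (norm (v + h *\<^sub>R D u) ^ 4 + T * (norm (v + h *\<^sub>R D u))^2 + R) \<partial>Lw)"
  proof (rule nn_integral_mono)
    fix u
    have w: "y + h *\<^sub>R b y u = v + h *\<^sub>R D u" unfolding v_def D_def by (simp add: scaleR_diff_right)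
    have "(\<integral>\<^sup>+ z. ennreal (norm (y + h *\<^sub>R b y u + (\<beta> * sqrt h) *\<^sub>R z) ^ 4) \<partial>Nd)
       = (\<integral>\<^sup>+ z. ennreal (norm ((v + h *\<^sub>R D u) + c *\<^sub>R z) ^ 4) \<partial>Nd)" unfolding w c_def ..
    also have "\<dots> \<le> ennreal (norm (v + h *\<^sub>R D u) ^ 4 + 6*c^2*(norm (v + h *\<^sub>R D u))^2*(1 + M4) + c^4 * M4)"
      using gauss_int_bound[of "v + h *\<^sub>R D u" c] Nprob unfolding Nd_def M4_def by simp
    also have "norm (v + h *\<^sub>R D u) ^ 4 + 6*c^2*(norm (v + h *\<^sub>R D u))^2*(1 + M4) + c^4 * M4
       = norm (v + h *\<^sub>R D u) ^ 4 + T * (norm (v + h *\<^sub>R D u))^2 + R"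
      unfolding T_def R_def by (simp add: algebra_simps)
    finally show "(\<integral>\<^sup>+ z. ennreal (norm (y + h *\<^sub>R b y u + (\<beta> * sqrt h) *\<^sub>R z) ^ 4) \<partial>Nd)
       \<le> ennreal (norm (v + h *\<^sub>R D u) ^ 4 + T * (norm (v + h *\<^sub>R D u))^2 + R)" .
  qed
  also have "\<dots> \<le> ennreal (((norm v)^2^2 + T*(norm v)^2 + R) + (8*h^2*(norm v)^2 + T*h^2) * m2 + 3*h^4 * m4)"
    unfolding m2_def m4_def
    by (rule law_int_bound[OF Lprob iD D0 i4 _ T0 R0]) (use h0 in simp)
  also have "\<dots> \<le> ennreal ((1 - K*h/2)*(norm y)^4 + h*(B1^2/K + B2 + B3))"
  proof (rule ennreal_leI)
    have k20: "0 \<le> k2" unfolding k2_def using k40 by simp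
    have A00: "0 \<le> A0" unfolding A0_def using K by simp
    have bb0: "0 \<le> bb" unfolding bb_def by simp
    have PB: "Q^2 + (6*(bb*h)*(1+M4))*Q + (bb*h)^2*M4 + (8*h^2*Q + (6*(bb*h)*(1+M4))*h^2)*m2 + 3*h^4*m4
       \<le> (1 - K*h/2)*Y^2 + h*(B1^2/K + B2 + B3)"
      unfolding B1_def B2_def B3_def C6_def E1_def
      by (rule Phi_bound[OF K A00 k20 k40 bb0 M40 Y0 _ h1 hK _ Q0 Qb m20 m2b m40 m4b])
         (use h0 hB2 in \<open>simp_all add: B2_def E1_def C6_def\<close>)
    have TT: "T = 6*(bb*h)*(1+M4)" unfolding T_def c2 by simp
    have RR: "R = (bb*h)^2*M4" unfolding R_def c4 by simp
    have YY: "Y^2 = (norm y)^4" unfolding Y_def by simp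
    show "((norm v)^2^2 + T*(norm v)^2 + R) + (8*h^2*(norm v)^2 + T*h^2) * m2 + 3*h^4 * m4
       \<le> (1 - K*h/2)*(norm y)^4 + h*(B1^2/K + B2 + B3)"
      using PB unfolding TT RR YY Q_def by simp
  qed
  finally show ?thesis .
qed



lemma distr_pair_eq_prod:
  assumes P: "prob_space M" and X: "X \<in> measurable M S" and Y: "Y \<in> measurable M T"
    and ind: "\<And>A B. A \<in> sets S \<Longrightarrow> B \<in> sets T \<Longrightarrow>
       emeasure M ((X -` A \<inter> space M) \<inter> (Y -` B \<inter> space M)) = emeasure M (X -` A \<inter> space M) * emeasure M (Y -` B \<inter> space M)"
  shows "distr M (S \<Otimes>\<^sub>M T) (\<lambda>x. (X x, Y x)) = distr M S X \<Otimes>\<^sub>M distr M T Y"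
proof -
  interpret prob_space M by fact
  have XY: "(\<lambda>x. (X x, Y x)) \<in> measurable M (S \<Otimes>\<^sub>M T)" using X Y by (rule measurable_Pair)
  interpret X: prob_space "distr M S X" by (rule prob_space_distr) fact
  interpret Y: prob_space "distr M T Y" by (rule prob_space_distr) fact
  interpret XY: pair_prob_space "distr M S X" "distr M T Y" ..
  show ?thesis
  proof (rule pair_measure_eqI[symmetric])
    show "sigma_finite_measure (distr M S X)" ..
    show "sigma_finite_measure (distr M T Y)" ..
    show "sets (distr M S X \<Otimes>\<^sub>M distr M T Y) = sets (distr M (S \<Otimes>\<^sub>M T) (\<lambda>x. (X x, Y x)))" by simp
    fix A B assume A: "A \<in> sets (distr M S X)" and B: "B \<in> sets (distr M T Y)"
    then have A': "A \<in> sets S" and B': "B \<in> sets T" by auto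
    have "emeasure (distr M (S \<Otimes>\<^sub>M T) (\<lambda>x. (X x, Y x))) (A \<times> B) = emeasure M ((\<lambda>x. (X x, Y x)) -` (A \<times> B) \<inter> space M)"
      using A' B' by (intro emeasure_distr[OF XY]) auto
    also have "(\<lambda>x. (X x, Y x)) -` (A \<times> B) \<inter> space M = (X -` A \<inter> space M) \<inter> (Y -` B \<inter> space M)" by auto
    also have "emeasure M \<dots> = emeasure M (X -` A \<inter> space M) * emeasure M (Y -` B \<inter> space M)"
      using ind[OF A' B'] .
    also have "\<dots> = emeasure (distr M S X) A * emeasure (distr M T Y) B"
      using A' B' X Y by (simp add: emeasure_distr)
    finally show "emeasure (distr M S X) A * emeasure (distr M T Y) B = emeasure (distr M (S \<Otimes>\<^sub>M T) (\<lambda>x. (X x, Y x))) (A \<times> B)" by simp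
  qed
qed

lemma Int_stable_vimage: "Int_stable {V -` A \<inter> \<Omega> | A. A \<in> sets N}"
proof (rule Int_stableI)
  fix a b assume "a \<in> {V -` A \<inter> \<Omega> | A. A \<in> sets N}" "b \<in> {V -` A \<inter> \<Omega> | A. A \<in> sets N}"
  then obtain A B where "a = V -` A \<inter> \<Omega>" "A \<in> sets N" "b = V -` B \<inter> \<Omega>" "B \<in> sets N" by auto
  then show "a \<inter> b \<in> {V -` A \<inter> \<Omega> | A. A \<in> sets N}"
    by (intro CollectI exI[of _ "A \<inter> B"]) auto
qed

lemma (in prob_space) indep_two:
  assumes ind: "indep_sets E Idx" and I1: "I1 \<subseteq> Idx" and I2: "I2 \<subseteq> Idx" and dis: "I1 \<inter> I2 = {}"
    and st: "\<And>i. i \<in> Idx \<Longrightarrow> Int_stable (E i)"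
    and a: "a \<in> sigma_sets (space M) (\<Union>i\<in>I1. E i)" and b: "b \<in> sigma_sets (space M) (\<Union>i\<in>I2. E i)"
  shows "prob (a \<inter> b) = prob a * prob b"
proof -
  let ?I = "\<lambda>j::bool. if j then I1 else I2"
  have U: "(\<Union>j\<in>UNIV. ?I j) \<subseteq> Idx" using I1 I2 by auto
  have "indep_sets (\<lambda>j. sigma_sets (space M) (\<Union>i\<in>?I j. E i)) UNIV"
  proof (rule indep_sets_collect_sigma)
    show "indep_sets E (\<Union>j\<in>UNIV. ?I j)" using indep_sets_mono_index[OF U ind] .
    show "Int_stable (E i)" if "j \<in> UNIV" "i \<in> ?I j" for i j using st that I1 I2 by (auto split: if_splits)
    show "disjoint_family_on ?I UNIV" using dis unfolding disjoint_family_on_def by auto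
  qed
  from indep_setsD[OF this, of UNIV "\<lambda>j. if j then a else b"] a b
  show ?thesis by (simp add: UNIV_bool Int_commute mult.commute)
qed

lemma measurable_sigma_gen:
  assumes G: "G \<subseteq> Pow \<Omega>" and V: "\<And>A. A \<in> sets N \<Longrightarrow> V -` A \<inter> \<Omega> \<in> G"
    and sp: "\<And>x. x \<in> \<Omega> \<Longrightarrow> V x \<in> space N"
  shows "V \<in> measurable (sigma \<Omega> G) N"
  using G V sp by (intro measurableI) (auto simp: sets_measure_of space_measure_of_conv intro: sigma_sets.Basic)

lemma vimage_in_sigma:
  assumes G: "G \<subseteq> Pow \<Omega>" and f: "f \<in> measurable (sigma \<Omega> G) N" and A: "A \<in> sets N"
  shows "f -` A \<inter> \<Omega> \<in> sigma_sets \<Omega> G"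
  using measurable_sets[OF f A] G by (simp add: sets_measure_of space_measure_of_conv)

lemma euler_meas:
  fixes b :: "real^'d \<Rightarrow> real^'n \<Rightarrow> real^'d"
  assumes b_meas: "(\<lambda>(x, u). b x u) \<in> borel_measurable borel"
    and X0: "X0 \<in> borel_measurable M'" and U: "\<And>j. j < k \<Longrightarrow> U j \<in> borel_measurable M'"
    and Z: "\<And>j. 1 \<le> j \<Longrightarrow> j \<le> k \<Longrightarrow> Z j \<in> borel_measurable M'"
  shows "euler_iter h \<beta> b X0 U Z k \<in> borel_measurable M'"
  using U Z
proof (induction k)
  case 0 then show ?case using X0 by simp
next
  case (Suc k)
  have Xk: "euler_iter h \<beta> b X0 U Z k \<in> borel_measurable M'" using Suc by auto
  have Uk: "U k \<in> borel_measurable M'" using Suc by auto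
  have Zk: "Z (Suc k) \<in> borel_measurable M'" using Suc by auto
  have bm: "(\<lambda>(x, u). b x u) \<in> borel_measurable (borel \<Otimes>\<^sub>M borel)" using b_meas by (simp add: borel_prod)
  have "(\<lambda>\<omega>. (\<lambda>(x, u). b x u) (euler_iter h \<beta> b X0 U Z k \<omega>, U k \<omega>)) \<in> borel_measurable M'"
    by (rule measurable_compose[OF measurable_Pair[OF Xk Uk] bm])
  then have bk: "(\<lambda>\<omega>. b (euler_iter h \<beta> b X0 U Z k \<omega>) (U k \<omega>)) \<in> borel_measurable M'" by simp
  show ?case using Xk bk Zk by simp
qed



lemma step_integral:
  fixes Y :: "'w \<Rightarrow> 'a::topological_space" and U :: "'w \<Rightarrow> 'b::topological_space" and Zn :: "'w \<Rightarrow> 'c::topological_space"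
  assumes P: "prob_space M"
    and Y: "Y \<in> borel_measurable M" and U: "U \<in> borel_measurable M" and Zn: "Zn \<in> borel_measurable M"
    and a: "distr M (borel \<Otimes>\<^sub>M borel) (\<lambda>\<omega>. (Y \<omega>, U \<omega>)) = distr M borel Y \<Otimes>\<^sub>M L"
    and b: "distr M ((borel \<Otimes>\<^sub>M borel) \<Otimes>\<^sub>M borel) (\<lambda>\<omega>. ((Y \<omega>, U \<omega>), Zn \<omega>)) = distr M (borel \<Otimes>\<^sub>M borel) (\<lambda>\<omega>. (Y \<omega>, U \<omega>)) \<Otimes>\<^sub>M N"
    and L: "sigma_finite_measure L" and N: "sigma_finite_measure N"
    and F: "F \<in> borel_measurable ((borel \<Otimes>\<^sub>M borel) \<Otimes>\<^sub>M borel)"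
  shows "(\<integral>\<^sup>+ \<omega>. F ((Y \<omega>, U \<omega>), Zn \<omega>) \<partial>M) = (\<integral>\<^sup>+ y. \<integral>\<^sup>+ u. \<integral>\<^sup>+ z. F ((y, u), z) \<partial>N \<partial>L \<partial>distr M borel Y)"
proof -
  have YU: "(\<lambda>\<omega>. (Y \<omega>, U \<omega>)) \<in> measurable M (borel \<Otimes>\<^sub>M borel)" using Y U by (rule measurable_Pair)
  have YUZ: "(\<lambda>\<omega>. ((Y \<omega>, U \<omega>), Zn \<omega>)) \<in> measurable M ((borel \<Otimes>\<^sub>M borel) \<Otimes>\<^sub>M borel)" using YU Zn by (rule measurable_Pair)
  have F': "F \<in> borel_measurable (distr M (borel \<Otimes>\<^sub>M borel) (\<lambda>\<omega>. (Y \<omega>, U \<omega>)) \<Otimes>\<^sub>M N)"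
    using F unfolding b[symmetric] by simp
  define G where "G q = (\<integral>\<^sup>+ z. F (q, z) \<partial>N)" for q
  have Gm: "G \<in> borel_measurable (distr M (borel \<Otimes>\<^sub>M borel) (\<lambda>\<omega>. (Y \<omega>, U \<omega>)))"
    unfolding G_def by (rule sigma_finite_measure.borel_measurable_nn_integral_fst[OF N F'])
  have Gm': "G \<in> borel_measurable (distr M borel Y \<Otimes>\<^sub>M L)" using Gm unfolding a .
  have "(\<integral>\<^sup>+ \<omega>. F ((Y \<omega>, U \<omega>), Zn \<omega>) \<partial>M) = (\<integral>\<^sup>+ p. F p \<partial>distr M ((borel \<Otimes>\<^sub>M borel) \<Otimes>\<^sub>M borel) (\<lambda>\<omega>. ((Y \<omega>, U \<omega>), Zn \<omega>)))"
    by (rule nn_integral_distr[OF YUZ, symmetric]) (use F in simp)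
  also have "\<dots> = (\<integral>\<^sup>+ p. F p \<partial>(distr M (borel \<Otimes>\<^sub>M borel) (\<lambda>\<omega>. (Y \<omega>, U \<omega>)) \<Otimes>\<^sub>M N))" unfolding b ..
  also have "\<dots> = (\<integral>\<^sup>+ q. G q \<partial>distr M (borel \<Otimes>\<^sub>M borel) (\<lambda>\<omega>. (Y \<omega>, U \<omega>)))"
    unfolding G_def by (rule sigma_finite_measure.nn_integral_fst[OF N F', symmetric])
  also have "\<dots> = (\<integral>\<^sup>+ q. G q \<partial>(distr M borel Y \<Otimes>\<^sub>M L))" unfolding a ..
  also have "\<dots> = (\<integral>\<^sup>+ y. \<integral>\<^sup>+ u. G (y, u) \<partial>L \<partial>distr M borel Y)"
    by (rule sigma_finite_measure.nn_integral_fst[OF L Gm', symmetric])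
  finally show ?thesis unfolding G_def .
qed



theorem lemma11:
  fixes a :: "real^'d \<Rightarrow> real^'d"
    and b :: "real^'d \<Rightarrow> real^'n \<Rightarrow> real^'d"
    and law :: "nat \<Rightarrow> (real^'n) measure"
    and \<beta> :: real
    and \<nu>0 :: "(real^'d) measure"
  assumes beta_nonneg: "\<beta> \<ge> 0"
    and a_meas: "a \<in> borel_measurable borel"
    and b_meas: "(\<lambda>(x, u). b x u) \<in> borel_measurable borel"
    and law_prob: "\<And>s. s \<ge> 1 \<Longrightarrow> prob_space (law s)"
    and law_sets: "\<And>s. s \<ge> 1 \<Longrightarrow> sets (law s) = sets borel"
    and unbiased: "\<And>s x. s \<ge> 1 \<Longrightarrow> integrable (law s) (b x) \<and> (\<integral>u. b x u \<partial>law s) = a x"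
    \<comment> \<open>(A1)\<close>
    and A1_lip: "\<exists>L. \<forall>x y. norm (a x - a y) \<le> L * norm (x - y)"
    and A1_mon: "\<exists>K>0. \<forall>x y. inner (x - y) (a x - a y) \<le> - K * (norm (x - y))\<^sup>2"
    and A1_C2: "\<exists>Ca1 Ca2. C2_bounded a Ca1 Ca2"
    \<comment> \<open>(A4)\<close>
    and A4: "\<exists>\<kappa> \<sigma>4. \<forall>s\<ge>1. \<sigma>4 s \<le> \<kappa> / (real s)\<^sup>2 \<and>
               (\<forall>x. (\<integral>\<^sup>+ u. ennreal ((norm (b x u - a x))^4) \<partial>law s)
                      \<le> ennreal (\<sigma>4 s * (1 + (norm x)^4)))"
    \<comment> \<open>(A7)\<close>
    and A7: "\<exists>L04. \<forall>x. (norm (a x))^4 \<le> L04 * (1 + (norm x)^4)"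
    \<comment> \<open>law of X_0, with finite fourth moment\<close>
    and nu0_prob: "prob_space \<nu>0"
    and nu0_sets: "sets \<nu>0 = sets borel"
    and nu0_moment: "(\<integral>\<^sup>+ x. ennreal ((norm x)^4) \<partial>\<nu>0) < \<infinity>"
  shows "\<exists>h0>0. \<exists>C>0. \<forall>s\<ge>1. \<forall>h. 0 < h \<and> h < h0 \<longrightarrow>
           (\<forall>(M :: 'w measure) X0 U Z.
              prob_space M \<and>
              X0 \<in> borel_measurable M \<and> distr M borel X0 = \<nu>0 \<and>
              (\<forall>k. U k \<in> borel_measurable M \<and> distr M borel (U k) = law s) \<and>
              (\<forall>k\<ge>1. distributed M lborel (Z k) std_gauss_density) \<and>
              joint_indep M X0 U Z
              \<longrightarrow> (\<forall>k\<ge>1. (\<integral>\<^sup>+ \<omega>. ennreal ((norm (euler_iter h \<beta> b X0 U Z k \<omega>))^4) \<partial>M)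
                          \<le> ennreal C))"
proof -
  obtain L where lip: "\<forall>x y. norm (a x - a y) \<le> L * norm (x - y)" using A1_lip by blast
  obtain K where K: "0 < K" and mono: "\<forall>x y. inner (x - y) (a x - a y) \<le> - K * (norm (x - y))\<^sup>2"
    using A1_mon by blast
  obtain \<kappa> \<sigma>4 where A4': "\<forall>s\<ge>1. \<sigma>4 s \<le> \<kappa> / (real s)\<^sup>2 \<and>
               (\<forall>x. (\<integral>\<^sup>+ u. ennreal ((norm (b x u - a x))^4) \<partial>law s) \<le> ennreal (\<sigma>4 s * (1 + (norm x)^4)))"
    using A4 by blast
  define Lp where "Lp = max L 0"
  have Lp0: "0 \<le> Lp" unfolding Lp_def by simp
  have lipp: "norm (a x - a y) \<le> Lp * norm (x - y)" for x y
  proof -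
    have "L * norm (x - y) \<le> Lp * norm (x - y)" unfolding Lp_def by (intro mult_right_mono) auto
    then show ?thesis using lip by (meson order_trans)
  qed
  define Nd :: "(real^'d) measure" where "Nd = density lborel std_gauss_density"
  define M4 where "M4 = enn2real (\<integral>\<^sup>+ z. ennreal (norm z ^ 4) \<partial>Nd)"
  define A0 where "A0 = 2*(norm (a 0))^2/K + 2*(norm (a 0))^2"
  define k4 where "k4 = max \<kappa> 0"
  define k2 where "k2 = (k4 + 1)/2"
  define bb where "bb = \<beta>^2"
  define C6 where "C6 = 6*bb*(1+M4)"
  define E1 where "E1 = 8*A0 + C6"
  define B1 where "B1 = 2*A0 + C6"
  define B2 where "B2 = k2*(16 + 2*E1) + 3*k4"
  define B3 where "B3 = A0^2 + C6*A0 + bb^2*M4"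
  define C0 where "C0 = B1^2/K + B2 + B3"
  define h0 where "h0 = min 1 (min (1/K) (min (K/(4*Lp^2+1)) (K/(4*B2+1))))"
  define m0 where "m0 = enn2real (\<integral>\<^sup>+ x. ennreal ((norm x)^4) \<partial>\<nu>0)"
  define Rm where "Rm = max m0 (2*C0/K)"
  have M40: "0 \<le> M4" unfolding M4_def by simp
  have A00: "0 \<le> A0" unfolding A0_def using K by simp
  have k40: "0 \<le> k4" unfolding k4_def by simp
  have k20: "0 \<le> k2" unfolding k2_def using k40 by simp
  have bb0: "0 \<le> bb" unfolding bb_def by simp
  have C60: "0 \<le> C6" unfolding C6_def using bb0 M40 by simp
  have E10: "0 \<le> E1" unfolding E1_def using A00 C60 by simp
  have B20: "0 \<le> B2" unfolding B2_def using k20 k40 E10 by simp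
  have B30: "0 \<le> B3" unfolding B3_def using A00 C60 bb0 M40 by simp
  have C00: "0 \<le> C0" unfolding C0_def using B20 B30 K by simp
  have "0 < 4*Lp^2 + 1" by (simp add: add_nonneg_pos)
  then have p1: "0 < K/(4*Lp^2+1)" using K by simp
  have "0 < 4*B2 + 1" using B20 by simp
  then have p2: "0 < K/(4*B2+1)" using K by simp
  have h0pos: "0 < h0" unfolding h0_def using K p1 p2 by simp
  have m00: "0 \<le> m0" unfolding m0_def by simp
  have m0fin: "(\<integral>\<^sup>+ x. ennreal ((norm x)^4) \<partial>\<nu>0) = ennreal m0"
    unfolding m0_def using nu0_moment by (simp add: ennreal_enn2real_if)
  have Rm0: "0 \<le> Rm" unfolding Rm_def using m00 by simp
  have main: "(\<integral>\<^sup>+ \<omega>. ennreal ((norm (euler_iter h \<beta> b X0 U Z k \<omega>))^4) \<partial>M) \<le> ennreal Rm"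
    if s1: "1 \<le> s" and hpos: "0 < h" and hh0: "h < h0" and PM: "prob_space M"
      and X0m: "X0 \<in> borel_measurable M" and X0d: "distr M borel X0 = \<nu>0"
      and Uh: "\<forall>k. U k \<in> borel_measurable M \<and> distr M borel (U k) = law s"
      and Zh: "\<forall>k\<ge>1. distributed M lborel (Z k) std_gauss_density"
      and JI: "joint_indep M X0 U Z"
    for s h and M :: "'w measure" and X0 U Z k
  proof -
    interpret prob_space M by fact
    have h1: "h \<le> 1" using hh0 unfolding h0_def by simp
    have hK: "K*h \<le> 1" using hh0 K unfolding h0_def by (simp add: field_simps)
    have hL: "4 * Lp^2 * h \<le> K"
    proof -
      have "h < K/(4*Lp^2+1)" using hh0 unfolding h0_def by simp
      then have "h*(4*Lp^2+1) < K" using Lp0 by (simp add: field_simps add_pos_nonneg)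
      then show ?thesis using hpos by (simp add: algebra_simps)
    qed
    have hB2: "4*h*B2 \<le> K"
    proof -
      have "h < K/(4*B2+1)" using hh0 unfolding h0_def by simp
      then have "h*(4*B2+1) < K" using B20 by (simp add: field_simps add_pos_nonneg)
      then show ?thesis using hpos by (simp add: algebra_simps)
    qed
    have Lprob: "prob_space (law s)" using law_prob s1 by simp
    have Lsets: "sets (law s) = sets borel" using law_sets s1 by simp
    have \<sigma>k: "\<sigma>4 s \<le> k4"
    proof -
      have "\<sigma>4 s \<le> \<kappa> / (real s)\<^sup>2" using A4' s1 by simp
      also have "\<kappa> / (real s)\<^sup>2 \<le> k4"
      proof (cases "0 \<le> \<kappa>")
        case True
        have "1 \<le> (real s)\<^sup>2" using s1 by simp
        then have "\<kappa> / (real s)\<^sup>2 \<le> \<kappa>" using True by (simp add: divide_le_eq mult_le_cancel_left1 mult.commute)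
        then show ?thesis unfolding k4_def by simp
      next
        case False
        then have "\<kappa> / (real s)\<^sup>2 \<le> 0" by (simp add: divide_nonpos_nonneg)
        then show ?thesis unfolding k4_def by simp
      qed
      finally show ?thesis .
    qed
    have Zm: "Z j \<in> borel_measurable M" if "1 \<le> j" for j
      using distributed_measurable[OF Zh[rule_format, OF that]] by (simp add: measurable_lborel1)
    have Zd: "distr M borel (Z j) = Nd" if "1 \<le> j" for j
    proof -
      have "distr M borel (Z j) = distr M lborel (Z j)" by (rule distr_cong) auto
      also have "\<dots> = Nd" unfolding Nd_def by (rule distributed_distr_eq_density[OF Zh[rule_format, OF that]])
      finally show ?thesis .
    qed
    have Nprob: "prob_space Nd" using prob_space_distr[OF Zm[of 1]] Zd[of 1] by simp
    define E where "E = (\<lambda>i. case i of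
              IX0 \<Rightarrow> {X0 -` A \<inter> space M | A. A \<in> sets borel}
            | IU k \<Rightarrow> {U k -` A \<inter> space M | A. A \<in> sets borel}
            | IZ k \<Rightarrow> {Z k -` A \<inter> space M | A. A \<in> sets borel})"
    have ind: "indep_sets E noise_index_set" using JI unfolding joint_indep_def E_def .
    have st: "Int_stable (E i)" for i unfolding E_def by (cases i) (auto intro: Int_stable_vimage)
    define G where "G S = (\<Union>i\<in>S. E i)" for S
    have GP: "G S \<subseteq> Pow (space M)" for S unfolding G_def E_def by (auto split: noise_idx.splits)
    have eX0: "X0 -` A \<inter> space M \<in> E IX0" if "A \<in> sets borel" for A unfolding E_def using that by auto
    have eU: "U j -` A \<inter> space M \<in> E (IU j)" if "A \<in> sets borel" for A j unfolding E_def using that by auto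
    have eZ: "Z j -` A \<inter> space M \<in> E (IZ j)" if "A \<in> sets borel" for A j unfolding E_def using that by auto
    have mX0: "X0 \<in> borel_measurable (sigma (space M) (G S))" if "IX0 \<in> S" for S
      by (rule measurable_sigma_gen[OF GP]) (use that eX0 in \<open>auto simp: G_def\<close>)
    have mU: "U j \<in> borel_measurable (sigma (space M) (G S))" if "IU j \<in> S" for S j
      by (rule measurable_sigma_gen[OF GP]) (use that eU in \<open>auto simp: G_def\<close>)
    have mZ: "Z j \<in> borel_measurable (sigma (space M) (G S))" if "IZ j \<in> S" for S j
      by (rule measurable_sigma_gen[OF GP]) (use that eZ in \<open>auto simp: G_def\<close>)
    define Hist where "Hist k = {IX0} \<union> IU ` {..<k} \<union> IZ ` {1..k}" for k
    have HistN: "Hist k \<subseteq> noise_index_set" for k unfolding Hist_def noise_index_set_def by auto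
    have mXk: "euler_iter h \<beta> b X0 U Z k \<in> borel_measurable (sigma (space M) (G S))" if "Hist k \<subseteq> S" for k S
      by (rule euler_meas[OF b_meas]) (use that in \<open>auto simp: Hist_def intro!: mX0 mU mZ\<close>)
    have mXkM: "euler_iter h \<beta> b X0 U Z k \<in> borel_measurable M" for k
      by (rule euler_meas[OF b_meas X0m]) (use Uh Zm in auto)
    have indep2: "prob (a' \<inter> b') = prob a' * prob b'"
      if "I1 \<subseteq> noise_index_set" "I2 \<subseteq> noise_index_set" "I1 \<inter> I2 = {}"
         "a' \<in> sigma_sets (space M) (G I1)" "b' \<in> sigma_sets (space M) (G I2)" for I1 I2 a' b'
      by (rule indep_two[OF ind that(1,2,3) st]) (use that in \<open>auto simp: G_def\<close>)
    have emult: "emeasure M (a' \<inter> b') = emeasure M a' * emeasure M b'"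
      if "prob (a' \<inter> b') = prob a' * prob b'" for a' b'
      using that by (simp add: emeasure_eq_measure ennreal_mult measure_nonneg)
    define F where "F p = ennreal (norm (fst (fst p) + h *\<^sub>R b (fst (fst p)) (snd (fst p)) + (\<beta> * sqrt h) *\<^sub>R snd p) ^ 4)"
      for p :: "((real^'d) \<times> (real^'n)) \<times> (real^'d)"
    have bm2: "(\<lambda>(x, u). b x u) \<in> borel_measurable (borel \<Otimes>\<^sub>M borel)" using b_meas by (simp add: borel_prod)
    have bF[measurable]: "(\<lambda>p. b (fst (fst p)) (snd (fst p))) \<in> borel_measurable ((borel \<Otimes>\<^sub>M borel) \<Otimes>\<^sub>M borel)"
      using measurable_compose[OF measurable_fst bm2] by (simp add: case_prod_beta)
    have Fm: "F \<in> borel_measurable ((borel \<Otimes>\<^sub>M borel) \<Otimes>\<^sub>M borel)" unfolding F_def by measurable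
    have ybound: "(\<integral>\<^sup>+ u. \<integral>\<^sup>+ z. F ((y, u), z) \<partial>Nd \<partial>law s) \<le> ennreal ((1 - K*h/2)*(norm y)^4 + h*C0)" for y
    proof -
      have unb: "integrable (law s) (b y)" "(\<integral>u. b y u \<partial>law s) = a y" using unbiased s1 by auto
      have A4y: "(\<integral>\<^sup>+ u. ennreal ((norm (b y u - a y))^4) \<partial>law s) \<le> ennreal (\<sigma>4 s * (1 + (norm y)^4))"
        using A4' s1 by simp
      have mo: "(y - 0) \<bullet> (a y - a 0) \<le> - K * (norm (y - 0))^2" using mono by blast
      have li: "norm (a y - a 0) \<le> Lp * norm (y - 0)" by (rule lipp)
      have Nprob': "prob_space (density lborel (std_gauss_density :: real^'d \<Rightarrow> ennreal))" using Nprob unfolding Nd_def .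
      note hB2' = hB2[unfolded B2_def E1_def C6_def bb_def k2_def A0_def M4_def Nd_def]
      show ?thesis
        unfolding F_def C0_def B1_def B2_def B3_def E1_def C6_def bb_def k2_def A0_def M4_def Nd_def
        using y_bound[OF Nprob' Lprob Lsets b_meas unb A4y \<sigma>k k40 K Lp0 mo li hpos h1 hK hL hB2']
        by simp
    qed
    show ?thesis
    proof (induction k)
      case 0
      have "(\<integral>\<^sup>+ \<omega>. ennreal ((norm (X0 \<omega>))^4) \<partial>M) = (\<integral>\<^sup>+ x. ennreal ((norm x)^4) \<partial>distr M borel X0)"
        by (rule nn_integral_distr[symmetric]) (use X0m in auto)
      also have "\<dots> = ennreal m0" unfolding X0d m0fin ..
      also have "\<dots> \<le> ennreal Rm" unfolding Rm_def by (intro ennreal_leI) simp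
      finally show ?case by simp
    next
      case (Suc k)
      define Y where "Y = euler_iter h \<beta> b X0 U Z k"
      have Ym: "Y \<in> borel_measurable M" unfolding Y_def by (rule mXkM)
      have Um: "U k \<in> borel_measurable M" using Uh by simp
      have Zn: "Z (Suc k) \<in> borel_measurable M" using Zm by simp
      have IH: "(\<integral>\<^sup>+ \<omega>. ennreal ((norm (Y \<omega>))^4) \<partial>M) \<le> ennreal Rm" using Suc.IH unfolding Y_def .
      have da: "distr M (borel \<Otimes>\<^sub>M borel) (\<lambda>\<omega>. (Y \<omega>, U k \<omega>)) = distr M borel Y \<Otimes>\<^sub>M law s"
      proof -
        have "distr M (borel \<Otimes>\<^sub>M borel) (\<lambda>\<omega>. (Y \<omega>, U k \<omega>)) = distr M borel Y \<Otimes>\<^sub>M distr M borel (U k)"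
        proof (rule distr_pair_eq_prod[OF PM Ym Um])
          fix A :: "(real^'d) set" and B :: "(real^'n) set" assume A: "A \<in> sets borel" and B: "B \<in> sets borel"
          have a1: "Y -` A \<inter> space M \<in> sigma_sets (space M) (G (Hist k))"
            unfolding Y_def by (rule vimage_in_sigma[OF GP mXk[OF subset_refl] A])
          have b1: "U k -` B \<inter> space M \<in> sigma_sets (space M) (G {IU k})"
            by (rule vimage_in_sigma[OF GP mU B]) simp
          show "emeasure M ((Y -` A \<inter> space M) \<inter> (U k -` B \<inter> space M)) = emeasure M (Y -` A \<inter> space M) * emeasure M (U k -` B \<inter> space M)"
            by (rule emult, rule indep2[OF HistN _ _ a1 b1]) (auto simp: noise_index_set_def Hist_def)
        qed
        then show ?thesis using Uh by simp
      qed
      have db: "distr M ((borel \<Otimes>\<^sub>M borel) \<Otimes>\<^sub>M borel) (\<lambda>\<omega>. ((Y \<omega>, U k \<omega>), Z (Suc k) \<omega>))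
           = distr M (borel \<Otimes>\<^sub>M borel) (\<lambda>\<omega>. (Y \<omega>, U k \<omega>)) \<Otimes>\<^sub>M Nd"
      proof -
        have YU: "(\<lambda>\<omega>. (Y \<omega>, U k \<omega>)) \<in> measurable M (borel \<Otimes>\<^sub>M borel)" using Ym Um by (rule measurable_Pair)
        have "distr M ((borel \<Otimes>\<^sub>M borel) \<Otimes>\<^sub>M borel) (\<lambda>\<omega>. ((Y \<omega>, U k \<omega>), Z (Suc k) \<omega>))
           = distr M (borel \<Otimes>\<^sub>M borel) (\<lambda>\<omega>. (Y \<omega>, U k \<omega>)) \<Otimes>\<^sub>M distr M borel (Z (Suc k))"
        proof (rule distr_pair_eq_prod[OF PM YU Zn])
          fix A :: "((real^'d) \<times> (real^'n)) set" and B :: "(real^'d) set" assume A: "A \<in> sets (borel \<Otimes>\<^sub>M borel)" and B: "B \<in> sets borel"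
          have YUs: "(\<lambda>\<omega>. (Y \<omega>, U k \<omega>)) \<in> measurable (sigma (space M) (G (insert (IU k) (Hist k)))) (borel \<Otimes>\<^sub>M borel)"
            unfolding Y_def by (intro measurable_Pair mXk mU) auto
          have a1: "(\<lambda>\<omega>. (Y \<omega>, U k \<omega>)) -` A \<inter> space M \<in> sigma_sets (space M) (G (insert (IU k) (Hist k)))"
            by (rule vimage_in_sigma[OF GP YUs A])
          have b1: "Z (Suc k) -` B \<inter> space M \<in> sigma_sets (space M) (G {IZ (Suc k)})"
            by (rule vimage_in_sigma[OF GP mZ B]) simp
          show "emeasure M (((\<lambda>\<omega>. (Y \<omega>, U k \<omega>)) -` A \<inter> space M) \<inter> (Z (Suc k) -` B \<inter> space M))
              = emeasure M ((\<lambda>\<omega>. (Y \<omega>, U k \<omega>)) -` A \<inter> space M) * emeasure M (Z (Suc k) -` B \<inter> space M)"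
            by (rule emult, rule indep2[OF _ _ _ a1 b1]) (auto simp: noise_index_set_def Hist_def)
        qed
        then show ?thesis using Zd[of "Suc k"] by simp
      qed
      have PY: "prob_space (distr M borel Y)" by (rule prob_space_distr[OF Ym])
      interpret PY: prob_space "distr M borel Y" by (rule PY)
      have Lsf: "sigma_finite_measure (law s)" using Lprob by (simp add: prob_space_imp_sigma_finite)
      have Nsf: "sigma_finite_measure Nd" using Nprob by (simp add: prob_space_imp_sigma_finite)
      have "(\<integral>\<^sup>+ \<omega>. ennreal ((norm (euler_iter h \<beta> b X0 U Z (Suc k) \<omega>))^4) \<partial>M)
          = (\<integral>\<^sup>+ \<omega>. F ((Y \<omega>, U k \<omega>), Z (Suc k) \<omega>) \<partial>M)"
        unfolding F_def Y_def by simp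
      also have "\<dots> = (\<integral>\<^sup>+ y. \<integral>\<^sup>+ u. \<integral>\<^sup>+ z. F ((y, u), z) \<partial>Nd \<partial>law s \<partial>distr M borel Y)"
        by (rule step_integral[OF PM Ym Um Zn da db Lsf Nsf Fm])
      also have "\<dots> \<le> (\<integral>\<^sup>+ y. ennreal ((1 - K*h/2)*(norm y)^4 + h*C0) \<partial>distr M borel Y)"
        by (intro nn_integral_mono ybound)
      also have "\<dots> = ennreal (1 - K*h/2) * (\<integral>\<^sup>+ y. ennreal ((norm y)^4) \<partial>distr M borel Y) + ennreal (h*C0)"
      proof -
        have c1: "0 \<le> 1 - K*h/2" using hK by simp
        have c2: "0 \<le> h*C0" using hpos C00 by simp
        have "(\<integral>\<^sup>+ y. ennreal ((1 - K*h/2)*(norm y)^4 + h*C0) \<partial>distr M borel Y)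
            = (\<integral>\<^sup>+ y. ennreal (1 - K*h/2) * ennreal ((norm y)^4) + ennreal (h*C0) \<partial>distr M borel Y)"
          using c1 c2 by (intro nn_integral_cong) (simp add: ennreal_plus ennreal_mult)
        also have "\<dots> = ennreal (1 - K*h/2) * (\<integral>\<^sup>+ y. ennreal ((norm y)^4) \<partial>distr M borel Y) + ennreal (h*C0)"
          apply (subst nn_integral_add)
            apply measurable
          apply (subst nn_integral_cmult)
           apply measurable
          apply (simp add: PY.emeasure_space_1[simplified])
          done
        finally show ?thesis .
      qed
      also have "(\<integral>\<^sup>+ y. ennreal ((norm y)^4) \<partial>distr M borel Y) = (\<integral>\<^sup>+ \<omega>. ennreal ((norm (Y \<omega>))^4) \<partial>M)"
        by (rule nn_integral_distr) (use Ym in auto)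
      also have "ennreal (1 - K*h/2) * \<dots> + ennreal (h*C0) \<le> ennreal (1 - K*h/2) * ennreal Rm + ennreal (h*C0)"
        using IH by (intro add_right_mono mult_left_mono) auto
      also have "\<dots> = ennreal ((1 - K*h/2) * Rm + h*C0)"
        using hK Rm0 hpos C00 by (simp add: ennreal_plus ennreal_mult)
      also have "\<dots> \<le> ennreal Rm"
      proof (rule ennreal_leI)
        have "2*C0/K \<le> Rm" unfolding Rm_def by simp
        then have "2*C0 \<le> K*Rm" using K by (simp add: divide_le_eq mult.commute)
        then have "h*(2*C0) \<le> h*(K*Rm)" using hpos by (intro mult_left_mono) auto
        then show "(1 - K*h/2) * Rm + h*C0 \<le> Rm" by (simp add: algebra_simps)
      qed
      finally show ?case .
    qed
  qed
  show ?thesis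
    apply (rule exI[of _ h0])
    apply (intro conjI h0pos)
    apply (rule exI[of _ "Rm + 1"])
    apply (intro conjI)
    using Rm0 apply simp
    apply (intro allI impI)
    subgoal for s h M X0 U Z k
      by (rule order_trans[OF main[of s h M X0 U Z k]]) (auto intro: ennreal_leI)
    done
qed


end
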